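(* Let $t\ge 1$ and $t\le k\le v$, $\lambda\ge 1$ be integers, and suppose there exists a $t$-$(v,k,\lambda)$ design whose number of blocks $b=\lambda\binom{v}{t}/\binom{k}{t}$ is divisible by $v$. Then there exists an authentication system with $k$ source states, $v$ messages and $b$ encoding rules which, when the source states are equiprobable and the encoding rules are used with equal probability, has perfect secrecy and is $(t-1)$-fold secure against spoofing. Moreover, this system is optimal (i.e. $b=\binom{v}{t}/\binom{k}{t}$) if and only if $\lambda=1$.
   Context: A $t$-$(v,k,\lambda)$ design is a pair $(X,\mathcal{B})$ where $X$ is a set of $v$ points and $\mathcal{B}$ is a collection of distinct $k$-subsets of $X$ (blocks; no repeated blocks allowed) such that every $t$-subset of $X$ is contained in exactly $\lambda$ blocks; $b=|\mathcal{B}|$. Authentication system: finite sets $\mathcal{S}$ of $k$ source states, $\mathcal{M}$ of $v$ messages, $\mathcal{E}$ of $b$ encoding rules, each $e\in\mathcal{E}$ an injective map $\mathcal{S}\to\mathcal{M}$; $M(e)=\{e(s):s\in\mathcal{S}\}$ is the set of messages valid (accepted) under $e$. A key $e$ is drawn according to a distribution $p_E$ on $\mathcal{E}$, source states according to $p_S$, independently; "equiprobable source states" means source states are independent and uniformly distributed, and for each $i$ every $i$-subset of distinct source states is equally likely to be the set of sent source states. Perfect secrecy: $p_S(s\mid m)=p_S(s)$ for every $s\in\mathcal{S}$ and every message $m$ (equivalently, $\sum_{e:\,e(s)=m}p_E(e)=\sum_{e:\,m\in M(e)}p_E(e)p_S(e^{-1}(m))$ for all $s,m$). Spoofing attack of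 order $i$: the opponent observes $i\ge 0$ distinct messages produced from $i$ distinct source states under the same secret key $e$, and then sends a new message distinct from these; he succeeds if it lies in $M(e)$. The deception probability $P_{d_i}$ is the maximum success probability over all opponent strategies. One always has $P_{d_i}\ge (k-i)/(v-i)$, and the system is called $t$-fold secure against spoofing if $P_{d_i}=(k-i)/(v-i)$ for all $0\le i\le t$. A $(t-1)$-fold secure system always has $b\ge \binom{v}{t}/\binom{k}{t}$; it is called optimal when equality holds. *)

theory Defs
  imports Complex_Main "HOL-Library.FuncSet"
begin

text \<open>A t-(v,k,lambda) design on the point set X with block set Bs (a set of
  blocks, so no repeated blocks).\<close>
definition t_design :: "nat \<Rightarrow> nat \<Rightarrow> nat \<Rightarrow> nat \<Rightarrow> 'a set \<Rightarrow> 'a set set \<Rightarrow> bool" where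
  "t_design t v k lam X Bs \<longleftrightarrow>
     finite X \<and> card X = v \<and>
     (\<forall>B\<in>Bs. B \<subseteq> X \<and> card B = k) \<and>
     (\<forall>T. T \<subseteq> X \<and> card T = t \<longrightarrow> card {B\<in>Bs. T \<subseteq> B} = lam)"

definition auth_system :: "'s set \<Rightarrow> 'm set \<Rightarrow> 'e set \<Rightarrow> ('e \<Rightarrow> 's \<Rightarrow> 'm) \<Rightarrow> bool" where
  "auth_system S M E enc \<longleftrightarrow>
     finite S \<and> finite M \<and> finite E \<and>
     (\<forall>e\<in>E. inj_on (enc e) S \<and> enc e ` S \<subseteq> M) \<and>
     inj_on (\<lambda>e. restrict (enc e) S) E"

definition perfect_secrecy ::
  "'s set \<Rightarrow> 'm set \<Rightarrow> 'e set \<Rightarrow> ('e \<Rightarrow> 's \<Rightarrow> 'm) \<Rightarrow> ('e \<Rightarrow> real) \<Rightarrow> ('s \<Rightarrow> real) \<Rightarrow> bool" where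
  "perfect_secrecy S M E enc pE pS \<longleftrightarrow>
     (\<forall>s\<in>S. \<forall>m\<in>M.
        (\<Sum>e\<in>{e\<in>E. enc e s = m}. pE e) =
        (\<Sum>e\<in>{e\<in>E. m \<in> enc e ` S}. pE e * pS (the_inv_into S (enc e) m)))"

text \<open>Joint probability that the opponent observes the set Y of messages
  (produced from distinct source states under one key) and that m is valid
  under that key. pT T is the probability that T is the set of sent source states.\<close>
definition spoof_joint ::
  "'s set \<Rightarrow> 'e set \<Rightarrow> ('e \<Rightarrow> 's \<Rightarrow> 'm) \<Rightarrow> ('e \<Rightarrow> real) \<Rightarrow> ('s set \<Rightarrow> real) \<Rightarrow> 'm set \<Rightarrow> 'm \<Rightarrow> real" where
  "spoof_joint S E enc pE pT Y m =
     (\<Sum>e\<in>{e\<in>E. insert m Y \<subseteq> enc e ` S}. pE e * pT (the_inv_into S (enc e) ` Y))"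

text \<open>Deception probability of order i: the success probability of an optimal
  opponent, who for every observation Y chooses the best new message m \<notin> Y.\<close>
definition deception_prob ::
  "'s set \<Rightarrow> 'm set \<Rightarrow> 'e set \<Rightarrow> ('e \<Rightarrow> 's \<Rightarrow> 'm) \<Rightarrow> ('e \<Rightarrow> real) \<Rightarrow> ('s set \<Rightarrow> real) \<Rightarrow> nat \<Rightarrow> real" where
  "deception_prob S M E enc pE pT i =
     (\<Sum>Y\<in>{Y. Y \<subseteq> M \<and> card Y = i}. Max ((\<lambda>m. spoof_joint S E enc pE pT Y m) ` (M - Y)))"

definition fold_secure ::
  "'s set \<Rightarrow> 'm set \<Rightarrow> 'e set \<Rightarrow> ('e \<Rightarrow> 's \<Rightarrow> 'm) \<Rightarrow> ('e \<Rightarrow> real) \<Rightarrow> ('s set \<Rightarrow> real) \<Rightarrow> nat \<Rightarrow> bool" where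
  "fold_secure S M E enc pE pT t \<longleftrightarrow>
     (\<forall>i\<le>t. deception_prob S M E enc pE pT i =
              (real (card S) - real i) / (real (card M) - real i))"

definition optimal_system :: "'s set \<Rightarrow> 'm set \<Rightarrow> 'e set \<Rightarrow> nat \<Rightarrow> bool" where
  "optimal_system S M E t \<longleftrightarrow>
     real (card E) = real (card M choose t) / real (card S choose t)"

end

theory Submission
  imports Defs
begin

lemma hall:
  assumes "finite I" "\<forall>i\<in>I. finite (F i)" "\<forall>J\<subseteq>I. card J \<le> card (\<Union>(F ` J))"
  shows "\<exists>f. (\<forall>i\<in>I. f i \<in> F i) \<and> inj_on f I"
  using assms
proof (induction "card I" arbitrary: I F rule: less_induct)
  case less
  show ?case
  proof (cases "I = {}")
    case True then show ?thesis by auto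
  next
    case False
    show ?thesis
    proof (cases "\<exists>J. J \<subset> I \<and> J \<noteq> {} \<and> card J = card (\<Union>(F ` J))")
      case True
      then obtain J where J: "J \<subset> I" "J \<noteq> {}" "card J = card (\<Union>(F ` J))" by blast
      define U where "U = \<Union>(F ` J)"
      have fJ: "finite J" using J less.prems(1) finite_subset by auto
      have cJ: "card J < card I" using J less.prems(1) psubset_card_mono by blast
      have "\<exists>f. (\<forall>i\<in>J. f i \<in> F i) \<and> inj_on f J"
      proof (rule less.hyps[OF cJ fJ])
        show "\<forall>i\<in>J. finite (F i)" using less.prems(2) J by auto
        show "\<forall>K\<subseteq>J. card K \<le> card (\<Union>(F ` K))" using less.prems(3) J by auto
      qed
      then obtain f1 where f1: "\<forall>i\<in>J. f1 i \<in> F i" "inj_on f1 J" by blast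
      have cIJ: "card (I - J) < card I"
        proof -
        have "card (I - J) = card I - card J" using J(1) fJ card_Diff_subset by blast
        moreover have "card J > 0" using J(2) fJ card_gt_0_iff by blast
        ultimately show ?thesis using cJ by linarith
      qed
      have fU: "finite U" unfolding U_def using fJ J less.prems(2) by (intro finite_UN_I) auto
      have hallG: "\<forall>K\<subseteq>I - J. card K \<le> card (\<Union>((\<lambda>i. F i - U) ` K))"
      proof (intro allI impI)
        fix K assume K: "K \<subseteq> I - J"
        have fK: "finite K" using K less.prems(1) finite_subset by auto
        have eq: "\<Union>(F ` (K \<union> J)) = \<Union>((\<lambda>i. F i - U) ` K) \<union> U" unfolding U_def by auto
        have fG: "finite (\<Union>((\<lambda>i. F i - U) ` K))" using fK K less.prems(2) by auto
        have "card K + card J = card (K \<union> J)" using K fK fJ by (subst card_Un_disjoint) auto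
        also have "\<dots> \<le> card (\<Union>(F ` (K \<union> J)))" using less.prems(3) K J(1)
          by (meson Diff_subset le_sup_iff order.trans psubset_imp_subset)
        also have "\<dots> = card (\<Union>((\<lambda>i. F i - U) ` K)) + card U"
          unfolding eq using fG fU by (subst card_Un_disjoint) auto
        finally show "card K \<le> card (\<Union>((\<lambda>i. F i - U) ` K))" using J(3) unfolding U_def by simp
      qed
      obtain f2 where f2: "\<forall>i\<in>I - J. f2 i \<in> F i - U" "inj_on f2 (I - J)"
        using less.hyps[OF cIJ _ _ hallG] less.prems by auto
      define f where "f i = (if i \<in> J then f1 i else f2 i)" for i
      have "\<forall>i\<in>I. f i \<in> F i" using f1 f2 unfolding f_def by auto
      moreover have "inj_on f I"
      proof (rule inj_onI)
        fix x y assume xy: "x \<in> I" "y \<in> I" "f x = f y"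
        show "x = y"
        proof (cases "x \<in> J"; cases "y \<in> J")
          assume "x \<in> J" "y \<in> J" then show ?thesis using xy f1 unfolding f_def by (auto dest: inj_onD)
        next
          assume "x \<notin> J" "y \<notin> J" then show ?thesis using xy f2 unfolding f_def by (auto dest: inj_onD)
        next
          assume a: "x \<in> J" "y \<notin> J"
          then have "f x \<in> U" "f y \<notin> U" using f1 f2 xy unfolding f_def U_def by auto
          then show ?thesis using xy by auto
        next
          assume a: "x \<notin> J" "y \<in> J"
          have "f y \<in> U" using a f1 xy(2) unfolding f_def U_def by auto
          moreover have "f x \<notin> U" using a f2 xy(1) unfolding f_def by auto
          ultimately show ?thesis using xy by auto
        qed
      qed
      ultimately show ?thesis by blast
    next
      case False2: False
      obtain i0 where i0: "i0 \<in> I" using False by auto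
      have "card {i0} \<le> card (F i0)" using less.prems(3) i0
      proof -
        have "card {i0} \<le> card (\<Union>(F ` {i0}))" using less.prems(3) i0 by blast
        then show ?thesis by simp
      qed
      then have "F i0 \<noteq> {}" by auto
      then obtain x where x: "x \<in> F i0" by auto
      have cI': "card (I - {i0}) < card I" using i0 less.prems(1) by (meson card_Diff1_less)
      have hallG: "\<forall>K\<subseteq>I - {i0}. card K \<le> card (\<Union>((\<lambda>i. F i - {x}) ` K))"
      proof (intro allI impI)
        fix K assume K: "K \<subseteq> I - {i0}"
        show "card K \<le> card (\<Union>((\<lambda>i. F i - {x}) ` K))"
        proof (cases "K = {}")
          case True then show ?thesis by simp
        next
          case Kne: False
          have "K \<subset> I" using K i0 by auto
          then have "card K < card (\<Union>(F ` K))" using False2 Kne less.prems(3)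
            by (metis le_neq_implies_less psubset_imp_subset)
          moreover have "\<Union>((\<lambda>i. F i - {x}) ` K) = \<Union>(F ` K) - {x}" by auto
          ultimately show ?thesis by (simp add: card_Diff_singleton_if, linarith)
        qed
      qed
      obtain f' where f': "\<forall>i\<in>I - {i0}. f' i \<in> F i - {x}" "inj_on f' (I - {i0})"
        using less.hyps[OF cI' _ _ hallG] less.prems by auto
      define f where "f = f'(i0 := x)"
      have "\<forall>i\<in>I. f i \<in> F i" using f' x unfolding f_def by auto
      moreover have "inj_on f I"
        unfolding f_def using f' i0
        by (auto simp: inj_on_def)
      ultimately show ?thesis by blast
    qed
  qed
qed


lemma double_count:
  assumes "finite A" "finite P"
  shows "(\<Sum>a\<in>A. card {p\<in>P. R a p}) = (\<Sum>p\<in>P. card {a\<in>A. R a p})"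
proof -
  have "(\<Sum>a\<in>A. card {p\<in>P. R a p}) = (\<Sum>a\<in>A. \<Sum>p\<in>P. if R a p then 1 else 0)"
    using assms by (simp add: sum.inter_filter[symmetric])
  also have "\<dots> = (\<Sum>p\<in>P. \<Sum>a\<in>A. if R a p then 1 else 0)" by (rule sum.swap)
  also have "\<dots> = (\<Sum>p\<in>P. card {a\<in>A. R a p})"
    using assms by (simp add: sum.inter_filter[symmetric])
  finally show ?thesis .
qed

lemma one_factor:
  assumes fA: "finite A" and fP: "finite P" and N: "\<forall>a\<in>A. N a \<subseteq> P \<and> card (N a) = Suc d"
    and deg: "\<forall>p\<in>P. card {a\<in>A. p \<in> N a} = Suc d * q"
  shows "\<exists>g. (\<forall>a\<in>A. g a \<in> N a) \<and> (\<forall>p\<in>P. card {a\<in>A. g a = p} = q)"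
proof -
  define F where "F a = N a \<times> {0..<q}" for a
  have fN: "finite (N a)" if "a \<in> A" for a using N fP that finite_subset by blast
  have "\<forall>J\<subseteq>A. card J \<le> card (\<Union>(F ` J))"
  proof (intro allI impI)
    fix J assume J: "J \<subseteq> A"
    have fJ: "finite J" using J fA finite_subset by blast
    define U where "U = \<Union>(N ` J)"
    have UP: "U \<subseteq> P" using N J unfolding U_def by auto
    have fU: "finite U" using UP fP finite_subset by blast
    have "Suc d * card J = (\<Sum>a\<in>J. card (N a))" using N J by (simp add: subset_iff)
    also have "\<dots> = (\<Sum>a\<in>J. card {p\<in>U. p \<in> N a})"
      by (rule sum.cong) (auto simp: U_def intro!: arg_cong[where f=card])
    also have "\<dots> = (\<Sum>p\<in>U. card {a\<in>J. p \<in> N a})" by (rule double_count[OF fJ fU])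
    also have "\<dots> \<le> (\<Sum>p\<in>U. Suc d * q)"
    proof (rule sum_mono)
      fix p assume p: "p \<in> U"
      have "card {a\<in>J. p \<in> N a} \<le> card {a\<in>A. p \<in> N a}" using J fA by (intro card_mono) auto
      then show "card {a\<in>J. p \<in> N a} \<le> Suc d * q" using deg UP p by auto
    qed
    also have "\<dots> = Suc d * (card U * q)" by (simp add: algebra_simps)
    finally have "card J \<le> card U * q" by (simp only: mult_le_cancel1)
    moreover have "\<Union>(F ` J) = U \<times> {0..<q}" unfolding F_def U_def by auto
    ultimately show "card J \<le> card (\<Union>(F ` J))" by (simp add: card_cartesian_product)
  qed
  moreover have "\<forall>a\<in>A. finite (F a)" using fN unfolding F_def by auto
  ultimately obtain h where h: "\<forall>a\<in>A. h a \<in> F a" "inj_on h A" using hall[OF fA] by blast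
  define g where "g a = fst (h a)" for a
  have gN: "\<forall>a\<in>A. g a \<in> N a" using h unfolding g_def F_def by auto
  have le: "card {a\<in>A. g a = p} \<le> q" for p
  proof -
    have "h ` {a\<in>A. g a = p} \<subseteq> {p} \<times> {0..<q}" using h unfolding g_def F_def by force
    moreover have "card (h ` {a\<in>A. g a = p}) = card {a\<in>A. g a = p}"
      using h(2) by (intro card_image) (auto intro: inj_on_subset)
    ultimately show ?thesis by (metis card_atLeastLessThan card_cartesian_product_singleton
        card_mono finite_SigmaI finite_atLeastLessThan finite.emptyI finite.insertI diff_zero)
  qed
  have "Suc d * card A = (\<Sum>a\<in>A. card (N a))" using N by simp
  also have "\<dots> = (\<Sum>a\<in>A. card {p\<in>P. p \<in> N a})"
  proof (rule sum.cong[OF refl])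
    fix a assume "a \<in> A"
    then have "{p\<in>P. p \<in> N a} = N a" using N by auto
    then show "card (N a) = card {p\<in>P. p \<in> N a}" by simp
  qed
  also have "\<dots> = (\<Sum>p\<in>P. card {a\<in>A. p \<in> N a})" by (rule double_count[OF fA fP])
  also have "\<dots> = Suc d * (card P * q)" using deg by (simp add: algebra_simps)
  finally have cA: "card A = card P * q" by (simp only: mult_cancel1) simp
  have sumg: "(\<Sum>p\<in>P. card {a\<in>A. g a = p}) = card A"
  proof -
    have "(\<Sum>p\<in>P. card {a\<in>A. g a = p}) = (\<Sum>a\<in>A. card {p\<in>P. g a = p})"
      by (rule double_count[OF fA fP, symmetric])
    also have "\<dots> = (\<Sum>a\<in>A. 1)"
    proof (rule sum.cong)
      fix a assume a: "a \<in> A"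
      then have "{p\<in>P. g a = p} = {g a}" using gN N by auto
      then show "card {p\<in>P. g a = p} = 1" by simp
    qed simp
    finally show ?thesis by simp
  qed
  have "\<forall>p\<in>P. card {a\<in>A. g a = p} = q"
  proof (rule ccontr)
    assume "\<not> ?thesis"
    then obtain p0 where "p0 \<in> P" "card {a\<in>A. g a = p0} \<noteq> q" by blast
    then have "\<exists>p\<in>P. card {a\<in>A. g a = p} < q" using le le_neq_implies_less by blast
    then have "(\<Sum>p\<in>P. card {a\<in>A. g a = p}) < (\<Sum>p\<in>P. q)"
      using le fP by (intro sum_strict_mono_ex1) auto
    then show False using sumg cA by simp
  qed
  then show ?thesis using gN by blast
qed

lemma decomp:
  assumes fA: "finite A" and fP: "finite P" and N: "\<forall>a\<in>A. N a \<subseteq> P \<and> card (N a) = d"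
    and deg: "\<forall>p\<in>P. card {a\<in>A. p \<in> N a} = d * q"
  shows "\<exists>f. (\<forall>a\<in>A. bij_betw (f a) {0..<d} (N a)) \<and>
             (\<forall>s<d. \<forall>p\<in>P. card {a\<in>A. f a s = p} = q)"
  using N deg
proof (induction d arbitrary: N)
  case 0
  then have "\<forall>a\<in>A. N a = {}" using fP by (meson card_0_eq finite_subset)
  then show ?case by (auto simp: bij_betw_def)
next
  case (Suc d)
  obtain g where g: "\<forall>a\<in>A. g a \<in> N a" "\<forall>p\<in>P. card {a\<in>A. g a = p} = q"
    using one_factor[OF fA fP Suc.prems] by blast
  define N' where "N' a = N a - {g a}" for a
  have fN: "finite (N a)" if "a \<in> A" for a using Suc.prems fP that finite_subset by blast
  have N': "\<forall>a\<in>A. N' a \<subseteq> P \<and> card (N' a) = d" using Suc.prems g unfolding N'_def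
    by (auto simp: card_Diff_singleton_if)
  have deg': "\<forall>p\<in>P. card {a\<in>A. p \<in> N' a} = d * q"
  proof
    fix p assume p: "p \<in> P"
    have un: "{a\<in>A. p \<in> N a} = {a\<in>A. p \<in> N' a} \<union> {a\<in>A. g a = p}"
      using g unfolding N'_def by auto
    have "card {a\<in>A. p \<in> N a} = card {a\<in>A. p \<in> N' a} + card {a\<in>A. g a = p}"
      unfolding un using fA by (intro card_Un_disjoint) (auto simp: N'_def)
    then show "card {a\<in>A. p \<in> N' a} = d * q" using Suc.prems(2) g(2) p by simp
  qed
  obtain f' where f': "\<forall>a\<in>A. bij_betw (f' a) {0..<d} (N' a)"
    "\<forall>s<d. \<forall>p\<in>P. card {a\<in>A. f' a s = p} = q"
    using Suc.IH[OF N' deg'] by blast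
  define f where "f a s = (if s = d then g a else f' a s)" for a s
  have "\<forall>a\<in>A. bij_betw (f a) {0..<Suc d} (N a)"
  proof
    fix a assume a: "a \<in> A"
    have "bij_betw (f a) {0..<d} (N' a)"
      using f' a unfolding f_def by (auto intro: bij_betw_cong[THEN iffD1])
    then have "bij_betw (f a) ({0..<d} \<union> {d}) (N' a \<union> {f a d})"
      by (intro notIn_Un_bij_betw) (auto simp: f_def N'_def)
    moreover have "N' a \<union> {f a d} = N a" using g a unfolding f_def N'_def by auto
    moreover have "{0..<d} \<union> {d} = {0..<Suc d}" by auto
    ultimately show "bij_betw (f a) {0..<Suc d} (N a)" by simp
  qed
  moreover have "\<forall>s<Suc d. \<forall>p\<in>P. card {a\<in>A. f a s = p} = q"
    using f'(2) g(2) unfolding f_def by (auto simp: less_Suc_eq)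
  ultimately show ?case by blast
qed


lemma subsets_containing:
  assumes fB: "finite B" and JB: "J \<subseteq> B" and cJ: "card J = j" and jt: "j \<le> t"
  shows "card {T. J \<subseteq> T \<and> T \<subseteq> B \<and> card T = t} = (card B - j) choose (t - j)"
proof -
  have fJ: "finite J" using fB JB finite_subset by blast
  have "bij_betw (\<lambda>U. U \<union> J) {U. U \<subseteq> B - J \<and> card U = t - j} {T. J \<subseteq> T \<and> T \<subseteq> B \<and> card T = t}"
  proof (rule bij_betw_byWitness[where f'="\<lambda>T. T - J"])
    show "\<forall>U\<in>{U. U \<subseteq> B - J \<and> card U = t - j}. U \<union> J - J = U" by auto
    show "\<forall>T\<in>{T. J \<subseteq> T \<and> T \<subseteq> B \<and> card T = t}. T - J \<union> J = T" by auto
    show "(\<lambda>U. U \<union> J) ` {U. U \<subseteq> B - J \<and> card U = t - j} \<subseteq> {T. J \<subseteq> T \<and> T \<subseteq> B \<and> card T = t}"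
    proof safe
      fix U assume U: "U \<subseteq> B - J" "card U = t - j"
      have "finite U" using U fB finite_subset by blast
      then show "card (U \<union> J) = t" using U fJ cJ jt by (subst card_Un_disjoint) auto
    qed (use JB in auto)
    show "(\<lambda>T. T - J) ` {T. J \<subseteq> T \<and> T \<subseteq> B \<and> card T = t} \<subseteq> {U. U \<subseteq> B - J \<and> card U = t - j}"
    proof safe
      fix T assume T: "J \<subseteq> T" "T \<subseteq> B" "t = card T"
      then show "card (T - J) = card T - j" using cJ fJ by (simp add: card_Diff_subset)
    qed auto
  qed
  then have "card {T. J \<subseteq> T \<and> T \<subseteq> B \<and> card T = t} = card {U. U \<subseteq> B - J \<and> card U = t - j}"
    by (simp add: bij_betw_same_card)
  also have "\<dots> = card (B - J) choose (t - j)" using fB by (simp add: n_subsets)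
  also have "card (B - J) = card B - j" using JB cJ fJ by (simp add: card_Diff_subset)
  finally show ?thesis .
qed

lemma design_finite: "t_design t v k lam X Bs \<Longrightarrow> finite Bs"
  unfolding t_design_def by (meson Pow_iff finite_Pow_iff finite_subset subsetI)

lemma design_lamj:
  assumes D: "t_design t v k lam X Bs" and JX: "J \<subseteq> X" and cJ: "card J = j" and jt: "j \<le> t"
  shows "card {B\<in>Bs. J \<subseteq> B} * ((k - j) choose (t - j)) = lam * ((v - j) choose (t - j))"
proof -
  have fX: "finite X" and cX: "card X = v" and BX: "\<forall>B\<in>Bs. B \<subseteq> X \<and> card B = k"
    and lam: "\<forall>T. T \<subseteq> X \<and> card T = t \<longrightarrow> card {B\<in>Bs. T \<subseteq> B} = lam"
    using D unfolding t_design_def by auto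
  have fB: "finite Bs" using design_finite[OF D] .
  define TJ where "TJ = {T. J \<subseteq> T \<and> T \<subseteq> X \<and> card T = t}"
  define BJ where "BJ = {B\<in>Bs. J \<subseteq> B}"
  have fTJ: "finite TJ" unfolding TJ_def using fX by (auto intro: finite_subset[of _ "Pow X"])
  have fBJ: "finite BJ" unfolding BJ_def using fB by auto
  have "(\<Sum>T\<in>TJ. card {B\<in>BJ. T \<subseteq> B}) = (\<Sum>B\<in>BJ. card {T\<in>TJ. T \<subseteq> B})"
    by (rule double_count[OF fTJ fBJ])
  moreover have "(\<Sum>T\<in>TJ. card {B\<in>BJ. T \<subseteq> B}) = (\<Sum>T\<in>TJ. lam)"
  proof (rule sum.cong[OF refl])
    fix T assume "T \<in> TJ"
    then have "{B\<in>BJ. T \<subseteq> B} = {B\<in>Bs. T \<subseteq> B}" "T \<subseteq> X" "card T = t"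
      unfolding TJ_def BJ_def by auto
    then show "card {B\<in>BJ. T \<subseteq> B} = lam" using lam by simp
  qed
  moreover have "(\<Sum>B\<in>BJ. card {T\<in>TJ. T \<subseteq> B}) = (\<Sum>B\<in>BJ. (k - j) choose (t - j))"
  proof (rule sum.cong[OF refl])
    fix B assume B: "B \<in> BJ"
    then have BX': "B \<subseteq> X" "card B = k" "J \<subseteq> B" using BX unfolding BJ_def by auto
    then have "{T\<in>TJ. T \<subseteq> B} = {T. J \<subseteq> T \<and> T \<subseteq> B \<and> card T = t}" unfolding TJ_def by auto
    then show "card {T\<in>TJ. T \<subseteq> B} = (k - j) choose (t - j)"
    proof -
      have "finite B" using BX'(1) fX finite_subset by blast
      then show ?thesis using subsets_containing[of B J j t] BX' cJ jt \<open>{T\<in>TJ. T \<subseteq> B} = _\<close> by simp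
    qed
  qed
  moreover have "card TJ = (v - j) choose (t - j)"
    unfolding TJ_def using subsets_containing[OF fX JX cJ jt] cX by (simp add: conj_commute)
  ultimately show ?thesis unfolding BJ_def by (simp add: mult.commute)
qed

lemma design_const:
  assumes D: "t_design t v k lam X Bs" and jt: "j \<le> t" and tk: "t \<le> k"
  shows "\<exists>c. (\<forall>J. J \<subseteq> X \<and> card J = j \<longrightarrow> card {B\<in>Bs. J \<subseteq> B} = c) \<and>
             c * (v choose j) = card Bs * (k choose j)"
proof -
  have fX: "finite X" and cX: "card X = v" and BX: "\<forall>B\<in>Bs. B \<subseteq> X \<and> card B = k"
    using D unfolding t_design_def by auto
  have fB: "finite Bs" using design_finite[OF D] .
  define c where "c = lam * ((v - j) choose (t - j)) div ((k - j) choose (t - j))"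
  have pos: "(k - j) choose (t - j) > 0" using jt tk by simp
  have cc: "\<forall>J. J \<subseteq> X \<and> card J = j \<longrightarrow> card {B\<in>Bs. J \<subseteq> B} = c"
  proof (intro allI impI)
    fix J assume "J \<subseteq> X \<and> card J = j"
    then have "card {B\<in>Bs. J \<subseteq> B} * ((k - j) choose (t - j)) = lam * ((v - j) choose (t - j))"
      using design_lamj[OF D _ _ jt] by blast
    then show "card {B\<in>Bs. J \<subseteq> B} = c" unfolding c_def using pos
      by (metis nonzero_mult_div_cancel_right not_gr0)
  qed
  define A where "A = {J. J \<subseteq> X \<and> card J = j}"
  have fA: "finite A" unfolding A_def using fX by (auto intro: finite_subset[of _ "Pow X"])
  have "(\<Sum>J\<in>A. card {B\<in>Bs. J \<subseteq> B}) = (\<Sum>B\<in>Bs. card {J\<in>A. J \<subseteq> B})"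
    by (rule double_count[OF fA fB])
  moreover have "(\<Sum>J\<in>A. card {B\<in>Bs. J \<subseteq> B}) = (\<Sum>J\<in>A. c)"
    using cc unfolding A_def by (intro sum.cong) auto
  moreover have "(\<Sum>B\<in>Bs. card {J\<in>A. J \<subseteq> B}) = (\<Sum>B\<in>Bs. k choose j)"
  proof (rule sum.cong[OF refl])
    fix B assume B: "B \<in> Bs"
    then have "{J\<in>A. J \<subseteq> B} = {J. J \<subseteq> B \<and> card J = j}" using BX unfolding A_def by auto
    moreover have "finite B" using B BX fX finite_subset by blast
    ultimately show "card {J\<in>A. J \<subseteq> B} = k choose j" using B BX by (simp add: n_subsets)
  qed
  moreover have "card A = v choose j" unfolding A_def using fX cX by (simp add: n_subsets)
  ultimately have "c * (v choose j) = card Bs * (k choose j)" by (simp add: mult.commute)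
  then show ?thesis using cc by blast
qed

lemma design_transfer:
  assumes D: "t_design t v k lam X Bs" and inj: "inj_on \<phi> X"
  shows "t_design t v k lam (\<phi> ` X) ((\<lambda>B. \<phi> ` B) ` Bs) \<and> card ((\<lambda>B. \<phi> ` B) ` Bs) = card Bs"
proof -
  have fX: "finite X" and cX: "card X = v" and BX: "\<forall>B\<in>Bs. B \<subseteq> X \<and> card B = k"
    and lam: "\<forall>T. T \<subseteq> X \<and> card T = t \<longrightarrow> card {B\<in>Bs. T \<subseteq> B} = lam"
    using D unfolding t_design_def by auto
  have injP: "inj_on (\<lambda>B. \<phi> ` B) (Pow X)" using inj by (rule inj_on_image_Pow)
  have injB: "inj_on (\<lambda>B. \<phi> ` B) Bs" using injP BX by (auto intro: inj_on_subset)
  have "\<forall>T. T \<subseteq> \<phi> ` X \<and> card T = t \<longrightarrow> card {B'\<in>(\<lambda>B. \<phi> ` B) ` Bs. T \<subseteq> B'} = lam"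
  proof (intro allI impI)
    fix T assume T: "T \<subseteq> \<phi> ` X \<and> card T = t"
    define T' where "T' = {x\<in>X. \<phi> x \<in> T}"
    have TT: "T = \<phi> ` T'" using T unfolding T'_def by auto
    have T'X: "T' \<subseteq> X" unfolding T'_def by auto
    have cT': "card T' = t" using T TT card_image inj T'X by (metis inj_on_subset)
    have "{B'\<in>(\<lambda>B. \<phi> ` B) ` Bs. T \<subseteq> B'} = (\<lambda>B. \<phi> ` B) ` {B\<in>Bs. T' \<subseteq> B}"
    proof safe
      fix B assume B: "B \<in> Bs" "T \<subseteq> \<phi> ` B"
      have "T' \<subseteq> B"
      proof
        fix x assume x: "x \<in> T'"
        then have "\<phi> x \<in> \<phi> ` B" using B TT by auto
        then obtain y where "y \<in> B" "\<phi> x = \<phi> y" by auto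
        moreover have "x \<in> X" "y \<in> X" using x T'X B BX \<open>y \<in> B\<close> by auto
        ultimately show "x \<in> B" using inj by (metis inj_onD)
      qed
      then show "\<phi> ` B \<in> (\<lambda>B. \<phi> ` B) ` {B \<in> Bs. T' \<subseteq> B}" using B by auto
    qed (use TT in auto)
    moreover have "card ((\<lambda>B. \<phi> ` B) ` {B\<in>Bs. T' \<subseteq> B}) = card {B\<in>Bs. T' \<subseteq> B}"
      using injB by (intro card_image) (auto intro: inj_on_subset)
    ultimately show "card {B'\<in>(\<lambda>B. \<phi> ` B) ` Bs. T \<subseteq> B'} = lam" using lam T'X cT' by simp
  qed
  moreover have "\<forall>B'\<in>(\<lambda>B. \<phi> ` B) ` Bs. B' \<subseteq> \<phi> ` X \<and> card B' = k"
    using BX inj by (metis card_image image_mono inj_on_subset imageE)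
  moreover have "card (\<phi> ` X) = v" using inj cX by (simp add: card_image)
  ultimately show ?thesis using fX injB by (simp add: t_design_def card_image)
qed


lemma card_pullback:
  assumes "bij_betw \<beta> E Bs"
  shows "card {e\<in>E. P (\<beta> e)} = card {B\<in>Bs. P B}"
proof -
  have "\<beta> ` {e\<in>E. P (\<beta> e)} = {B\<in>Bs. P B}" using assms by (auto simp: bij_betw_def)
  moreover have "inj_on \<beta> {e\<in>E. P (\<beta> e)}" using assms by (auto simp: bij_betw_def intro: inj_on_subset)
  ultimately show ?thesis by (metis card_image)
qed

lemma main_nat:
  fixes t k v lam :: nat and X :: "nat set" and Bs :: "nat set set"
  assumes t1: "1 \<le> t" and tk: "t \<le> k" and kv: "k \<le> v" and l1: "1 \<le> lam"
    and D: "t_design t v k lam X Bs"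
    and dv: "v dvd card Bs"
  shows "\<exists>(S :: nat set) (M :: nat set) (E :: nat set) (enc :: nat \<Rightarrow> nat \<Rightarrow> nat).
           auth_system S M E enc \<and> card S = k \<and> card M = v \<and> card E = card Bs \<and>
           perfect_secrecy S M E enc (\<lambda>_. 1 / real (card E)) (\<lambda>_. 1 / real (card S)) \<and>
           fold_secure S M E enc (\<lambda>_. 1 / real (card E))
             (\<lambda>T. 1 / real (card S choose card T)) (t - 1) \<and>
           (optimal_system S M E t \<longleftrightarrow> lam = 1)"
proof -
  have fX: "finite X" and cX: "card X = v" and BX: "\<forall>B\<in>Bs. B \<subseteq> X \<and> card B = k"
    using D unfolding t_design_def by auto
  have fB: "finite Bs" using design_finite[OF D] .
  define b where "b = card Bs"
  define q where "q = b div v"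
  have bq: "b = v * q" using dv unfolding q_def b_def by simp
  have v0: "v > 0" "k > 0" using t1 tk kv by auto
  have blam: "b * (k choose t) = lam * (v choose t)"
    using design_lamj[OF D, of "{}" 0] unfolding b_def by simp
  have vt: "v choose t > 0" using tk kv by simp
  have b0: "b > 0"
  proof (rule ccontr)
    assume "\<not> b > 0"
    then have "lam * (v choose t) = 0" using blam by simp
    then show False using l1 vt by simp
  qed
  obtain c1 where c1: "\<forall>J. J \<subseteq> X \<and> card J = 1 \<longrightarrow> card {B\<in>Bs. J \<subseteq> B} = c1"
    "c1 * (v choose 1) = card Bs * (k choose 1)"
    using design_const[OF D t1 tk] by blast
  have c1v: "c1 = k * q" using c1(2) bq v0 unfolding b_def by (simp add: algebra_simps)
  have deg: "\<forall>p\<in>X. card {B\<in>Bs. p \<in> id B} = k * q"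
  proof
    fix p assume "p \<in> X"
    then have "card {B\<in>Bs. {p} \<subseteq> B} = c1" using c1(1)[rule_format, of "{p}"] by simp
    then show "card {B\<in>Bs. p \<in> id B} = k * q" using c1v by simp
  qed
  obtain f where f: "\<forall>B\<in>Bs. bij_betw (f B) {0..<k} B"
    "\<forall>s<k. \<forall>p\<in>X. card {B\<in>Bs. f B s = p} = q"
    using decomp[OF fB fX _ deg] BX by auto
  obtain \<beta> where \<beta>: "bij_betw \<beta> {0..<b} Bs" using ex_bij_betw_nat_finite[OF fB] unfolding b_def by blast
  define S where "S = {0..<k::nat}"
  define E where "E = {0..<b}"
  define enc where "enc e s = f (\<beta> e) s" for e s
  have \<beta>E: "e \<in> E \<Longrightarrow> \<beta> e \<in> Bs" for e using \<beta> unfolding E_def by (auto simp: bij_betw_def)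
  have img: "e \<in> E \<Longrightarrow> enc e ` S = \<beta> e" for e
    using f(1) \<beta>E unfolding enc_def S_def by (auto simp: bij_betw_def)
  have injenc: "e \<in> E \<Longrightarrow> inj_on (enc e) S" for e
    using f(1) \<beta>E unfolding enc_def S_def by (auto simp: bij_betw_def)
  have cE: "card {e\<in>E. P (\<beta> e)} = card {B\<in>Bs. P B}" for P
    using card_pullback[OF \<beta>] unfolding E_def .
  have auth: "auth_system S X E enc"
    unfolding auth_system_def
  proof (intro conjI ballI)
    show "finite S" "finite X" "finite E" using fX unfolding S_def E_def by auto
    fix e assume e: "e \<in> E"
    show "inj_on (enc e) S" using injenc[OF e] .
    show "enc e ` S \<subseteq> X" using img[OF e] \<beta>E[OF e] BX by auto
  next
    show "inj_on (\<lambda>e. restrict (enc e) S) E"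
    proof (rule inj_onI)
      fix e e' assume e: "e \<in> E" "e' \<in> E" "restrict (enc e) S = restrict (enc e') S"
      then have "enc e ` S = enc e' ` S" by (metis image_restrict_eq)
      then have "\<beta> e = \<beta> e'" using img e by simp
      then show "e = e'" using \<beta> e unfolding E_def by (auto simp: bij_betw_def dest: inj_onD)
    qed
  qed
  have cardS: "card S = k" and cardE: "card E = b" unfolding S_def E_def by auto
  have ps: "perfect_secrecy S X E enc (\<lambda>_. 1 / real (card E)) (\<lambda>_. 1 / real (card S))"
    unfolding perfect_secrecy_def
  proof (intro ballI)
    fix s m assume s: "s \<in> S" and m: "m \<in> X"
    have "card {e\<in>E. enc e s = m} = q"
      using cE[of "\<lambda>B. f B s = m"] f(2) s m unfolding enc_def S_def by simp
    then have L: "(\<Sum>e\<in>{e\<in>E. enc e s = m}. 1 / real (card E)) = real q / real b"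
      using cardE by simp
    have "{e\<in>E. m \<in> enc e ` S} = {e\<in>E. m \<in> \<beta> e}" using img by auto
    moreover have "card {e\<in>E. m \<in> \<beta> e} = k * q" using cE[of "\<lambda>B. m \<in> B"] deg m by simp
    ultimately have R: "(\<Sum>e\<in>{e\<in>E. m \<in> enc e ` S}. 1 / real (card E) * (1 / real (card S)))
        = real (k * q) / (real b * real k)" using cardE cardS by simp
    show "(\<Sum>e\<in>{e\<in>E. enc e s = m}. 1 / real (card E)) =
        (\<Sum>e\<in>{e\<in>E. m \<in> enc e ` S}. 1 / real (card E) * ((\<lambda>_. 1 / real (card S)) (the_inv_into S (enc e) m)))"
      using L R v0 by simp
  qed
  have fs: "fold_secure S X E enc (\<lambda>_. 1 / real (card E)) (\<lambda>T. 1 / real (card S choose card T)) (t - 1)"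
    unfolding fold_secure_def
  proof (intro allI impI)
    fix i assume i: "i \<le> t - 1"
    have it: "Suc i \<le> t" using i t1 by simp
    obtain c where c: "\<forall>J. J \<subseteq> X \<and> card J = Suc i \<longrightarrow> card {B\<in>Bs. J \<subseteq> B} = c"
      "c * (v choose Suc i) = card Bs * (k choose Suc i)"
      using design_const[OF D it tk] by blast
    define val where "val = real c * (1 / real b * (1 / real (k choose i)))"
    have sp: "spoof_joint S E enc (\<lambda>_. 1 / real (card E)) (\<lambda>T. 1 / real (card S choose card T)) Y m = val"
      if Y: "Y \<subseteq> X" "card Y = i" and m: "m \<in> X - Y" for Y m
    proof -
      have fY: "finite Y" using Y fX finite_subset by blast
      have "(\<Sum>e\<in>{e\<in>E. insert m Y \<subseteq> enc e ` S}. 1 / real (card E) *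
              (1 / real (card S choose card (the_inv_into S (enc e) ` Y))))
          = (\<Sum>e\<in>{e\<in>E. insert m Y \<subseteq> enc e ` S}. 1 / real b * (1 / real (k choose i)))"
      proof (rule sum.cong[OF refl])
        fix e assume e: "e \<in> {e\<in>E. insert m Y \<subseteq> enc e ` S}"
        have "inj_on (the_inv_into S (enc e)) (enc e ` S)" using injenc e by (simp add: inj_on_the_inv_into)
        moreover have "Y \<subseteq> enc e ` S" using e by auto
        ultimately have "inj_on (the_inv_into S (enc e)) Y" by (rule inj_on_subset)
        then have "card (the_inv_into S (enc e) ` Y) = i" using Y(2) by (simp add: card_image)
        then show "1 / real (card E) * (1 / real (card S choose card (the_inv_into S (enc e) ` Y))) =
            1 / real b * (1 / real (k choose i))" using cardE cardS by simp
      qed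
      also have "\<dots> = real (card {e\<in>E. insert m Y \<subseteq> \<beta> e}) * (1 / real b * (1 / real (k choose i)))"
      proof -
        have "{e\<in>E. insert m Y \<subseteq> enc e ` S} = {e\<in>E. insert m Y \<subseteq> \<beta> e}" using img by auto
        then show ?thesis by simp
      qed
      also have "card {e\<in>E. insert m Y \<subseteq> \<beta> e} = c"
      proof -
        have "card (insert m Y) = Suc i" using m Y fY by simp
        then have "card {B\<in>Bs. insert m Y \<subseteq> B} = c" using c(1) m Y by blast
        then show ?thesis using cE[of "\<lambda>B. insert m Y \<subseteq> B"] by simp
      qed
      finally show ?thesis unfolding spoof_joint_def val_def .
    qed
    have "deception_prob S X E enc (\<lambda>_. 1 / real (card E)) (\<lambda>T. 1 / real (card S choose card T)) i
        = (\<Sum>Y\<in>{Y. Y \<subseteq> X \<and> card Y = i}. val)"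
      unfolding deception_prob_def
    proof (rule sum.cong[OF refl])
      fix Y assume Y: "Y \<in> {Y. Y \<subseteq> X \<and> card Y = i}"
      have "i < v" using i t1 tk kv by simp
      have YX: "Y \<subseteq> X" "card Y = i" using Y by auto
      have cXY: "card (X - Y) = v - i" using YX cX fX by (metis card_Diff_subset finite_subset)
      have "X - Y \<noteq> {}"
      proof
        assume "X - Y = {}"
        then have "card (X - Y) = 0" by (simp only: card.empty)
        then show False using cXY \<open>i < v\<close> by linarith
      qed
      then have "(\<lambda>m. spoof_joint S E enc (\<lambda>_. 1 / real (card E)) (\<lambda>T. 1 / real (card S choose card T)) Y m) ` (X - Y) = {val}"
        using sp Y by auto
      then show "Max ((\<lambda>m. spoof_joint S E enc (\<lambda>_. 1 / real (card E)) (\<lambda>T. 1 / real (card S choose card T)) Y m) ` (X - Y)) = val"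
        by simp
    qed
    also have "\<dots> = real (v choose i) * val" using fX cX by (simp add: n_subsets)
    also have "\<dots> = (real k - real i) / (real v - real i)"
    proof -
      have iv: "i < v" "i \<le> k" using i t1 tk kv by auto
      have a1: "Suc i * (v choose Suc i) = (v - i) * (v choose i)"
        using binomial_absorb_comp[of v i] binomial_absorption[of i v] by simp
      have a2: "Suc i * (k choose Suc i) = (k - i) * (k choose i)"
        using binomial_absorb_comp[of k i] binomial_absorption[of i k] by simp
      have "Suc i * (c * (v choose Suc i)) = Suc i * (b * (k choose Suc i))" using c(2) unfolding b_def by simp
      then have "c * (Suc i * (v choose Suc i)) = b * (Suc i * (k choose Suc i))" by (simp only: mult.left_commute)
      then have "c * ((v - i) * (v choose i)) = b * ((k - i) * (k choose i))" using a1 a2 by simp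
      then have eq: "real c * (real v - real i) * real (v choose i) = real b * (real k - real i) * real (k choose i)"
      proof -
        have "real (c * ((v - i) * (v choose i))) = real (b * ((k - i) * (k choose i)))"
          using \<open>c * ((v - i) * (v choose i)) = b * ((k - i) * (k choose i))\<close> by simp
        then show ?thesis using iv by (simp add: of_nat_diff ac_simps)
      qed
      have p1: "real (k choose i) > 0" using iv by simp
      have p2: "real v - real i > 0" using iv by simp
      have p3: "real b > 0" using b0 by simp
      have "real (v choose i) * val = (real c * (real v - real i) * real (v choose i)) / (real b * real (k choose i) * (real v - real i))"
        unfolding val_def using p1 p2 p3 by (simp add: field_simps)
      also have "\<dots> = (real b * real (k choose i) * (real k - real i)) / (real b * real (k choose i) * (real v - real i))"
        unfolding eq by (simp add: ac_simps)
      also have "\<dots> = (real k - real i) / (real v - real i)"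
        using p1 p3 by simp
      finally show ?thesis .
    qed
    finally show "deception_prob S X E enc (\<lambda>_. 1 / real (card E)) (\<lambda>T. 1 / real (card S choose card T)) i
        = (real (card S) - real i) / (real (card X) - real i)" using cardS cX by simp
  qed
  have opt: "optimal_system S X E t \<longleftrightarrow> lam = 1"
  proof -
    have p: "real (k choose t) > 0" "real (v choose t) > 0" using tk kv by auto
    have "real b * real (k choose t) = real lam * real (v choose t)" using blam by (simp only: of_nat_mult[symmetric])
    then have e1: "real b = real lam * (real (v choose t) / real (k choose t))" using p
      by (simp add: eq_divide_eq)
    define r where "r = real (v choose t) / real (k choose t)"
    have r0: "r \<noteq> 0" using p unfolding r_def by simp
    have "real b = r \<longleftrightarrow> real lam * r = 1 * r" using e1 unfolding r_def by simp
    also have "\<dots> \<longleftrightarrow> real lam = 1" using r0 by simp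
    finally have "real b = real (v choose t) / real (k choose t) \<longleftrightarrow> real lam = 1" unfolding r_def .
    then show ?thesis unfolding optimal_system_def using cardE cX cardS by simp
  qed
  show ?thesis
    by (rule exI[of _ S], rule exI[of _ X], rule exI[of _ E], rule exI[of _ enc])
       (use auth cardS cX cardE ps fs opt b_def in simp)
qed

theorem mainTheorem1:
  fixes t k v lam :: nat and X :: "'a set" and Bs :: "'a set set"
  assumes "1 \<le> t" and "t \<le> k" and "k \<le> v" and "1 \<le> lam"
    and "t_design t v k lam X Bs"
    and "v dvd card Bs"
  shows "\<exists>(S :: nat set) (M :: nat set) (E :: nat set) (enc :: nat \<Rightarrow> nat \<Rightarrow> nat).
           auth_system S M E enc \<and> card S = k \<and> card M = v \<and> card E = card Bs \<and>
           perfect_secrecy S M E enc (\<lambda>_. 1 / real (card E)) (\<lambda>_. 1 / real (card S)) \<and>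
           fold_secure S M E enc (\<lambda>_. 1 / real (card E))
             (\<lambda>T. 1 / real (card S choose card T)) (t - 1) \<and>
           (optimal_system S M E t \<longleftrightarrow> lam = 1)"
proof -
  have fX: "finite X" using assms(5) unfolding t_design_def by auto
  obtain \<phi> :: "'a \<Rightarrow> nat" where "bij_betw \<phi> X {0..<card X}" using ex_bij_betw_finite_nat[OF fX] by blast
  then have inj: "inj_on \<phi> X" by (simp add: bij_betw_def)
  have T: "t_design t v k lam (\<phi> ` X) ((\<lambda>B. \<phi> ` B) ` Bs)" "card ((\<lambda>B. \<phi> ` B) ` Bs) = card Bs"
    using design_transfer[OF assms(5) inj] by auto
  show ?thesis using main_nat[OF assms(1-4) T(1)] T(2) assms(6) by simp
qed

end
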